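(* Let $T$ be a semi-complete digraph on $n$ vertices that admits an ordering $(v_1,\dots,v_n)$ of cost at most $k$. Then the width of this ordering is at most $(4k)^{2/3}$.
   Context: A simple digraph (no loops, no multiple arcs) $T$ is semi-complete if for every pair of distinct vertices $v,w$ at least one of $(v,w),(w,v)$ is an arc. The cost of an ordering $(v_1,\dots,v_n)$ of $V(T)$ is $\sum_{(v_i,v_j)\in E(T),\,i>j}(i-j)$. The width of the ordering is $\max_{1\le t\le n-1}|E(\{v_{t+1},\dots,v_n\},\{v_1,\dots,v_t\})|$, where $E(A,B)$ is the set of arcs with tail in $A$ and head in $B$. *)

theory Defs
  imports Complex_Main
begin

definition simple_digraph :: "'a set \<Rightarrow> ('a \<times> 'a) set \<Rightarrow> bool" where
  "simple_digraph V E \<longleftrightarrow> finite V \<and> E \<subseteq> V \<times> V \<and> (\<forall>v. (v, v) \<notin> E)"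

definition semi_complete :: "'a set \<Rightarrow> ('a \<times> 'a) set \<Rightarrow> bool" where
  "semi_complete V E \<longleftrightarrow> simple_digraph V E \<and>
     (\<forall>v\<in>V. \<forall>w\<in>V. v \<noteq> w \<longrightarrow> (v, w) \<in> E \<or> (w, v) \<in> E)"

text \<open>An ordering of V is a list enumerating V without repetition; list index i
  corresponds to the paper's position i+1.\<close>

definition is_ordering :: "'a set \<Rightarrow> 'a list \<Rightarrow> bool" where
  "is_ordering V vs \<longleftrightarrow> distinct vs \<and> set vs = V"

definition ord_cost :: "('a \<times> 'a) set \<Rightarrow> 'a list \<Rightarrow> nat" where
  "ord_cost E vs = (\<Sum>(i, j) \<in> {(i, j). i < length vs \<and> j < i \<and> (vs ! i, vs ! j) \<in> E}. i - j)"

definition arcs_between :: "('a \<times> 'a) set \<Rightarrow> 'a set \<Rightarrow> 'a set \<Rightarrow> ('a \<times> 'a) set" where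
  "arcs_between E A B = {(u, w) \<in> E. u \<in> A \<and> w \<in> B}"

text \<open>Width: max over 1 \<le> t \<le> n-1 of |E({v_(t+1),...,v_n},{v_1,...,v_t})|
  (taken to be 0 when n \<le> 1, i.e. the maximum over an empty range).\<close>

definition ord_width :: "('a \<times> 'a) set \<Rightarrow> 'a list \<Rightarrow> nat" where
  "ord_width E vs = Max ({0} \<union>
     {card (arcs_between E (set (drop t vs)) (set (take t vs))) | t. 1 \<le> t \<and> t \<le> length vs - 1})"

end

theory Submission
  imports Defs
begin

lemma low_card:
  assumes "P \<subseteq> {(i,j). j < t \<and> t \<le> (i::nat) \<and> i - j \<le> D}"
  shows "card P \<le> D * D"
proof -
  have "P \<subseteq> {t..<t+D} \<times> {t-D..<t}" using assms by auto
  hence "card P \<le> card ({t..<t+D} \<times> {t-D..<t})" by (intro card_mono) auto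
  also have "\<dots> \<le> D * D" by (simp add: card_cartesian_product) arith
  finally show ?thesis .
qed

lemma comb:
  assumes fin: "finite P" and sub: "P \<subseteq> {(i,j). j < t \<and> t \<le> (i::nat)}"
  shows "(card P)^3 \<le> 16 * (\<Sum>(i,j)\<in>P. i - j)^2"
proof -
  define w where "w = card P"
  define m where "m = (LEAST m. w < 2 * m^2)"
  have ex: "w < 2 * (w+1)^2" by (simp add: power2_eq_square)
  have m1: "w < 2 * m^2" unfolding m_def by (rule LeastI[of _ "w+1"], rule ex)
  have mpos: "m > 0" using m1 by (cases m) auto
  define D where "D = m - 1"
  have mD: "m = D + 1" using mpos D_def by simp
  have "D < m" using mD by simp
  hence D1: "\<not> w < 2 * D^2" unfolding m_def by (rule not_less_Least)
  hence D2: "2 * D^2 \<le> w" by simp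
  have wD: "w < 2 * (D+1)^2" using m1 mD by simp
  define L where "L = {p\<in>P. fst p - snd p \<le> D}"
  define H where "H = P - L"
  have cL: "card L \<le> D * D" unfolding L_def by (rule low_card[of _ t]) (use sub in auto)
  have finL: "finite L" "finite H" using fin unfolding L_def H_def by auto
  have cH: "card H = w - card L" unfolding H_def w_def
    by (rule card_Diff_subset) (auto simp: L_def intro: finite_subset[OF _ fin])
  have "(\<Sum>(i,j)\<in>P. i - j) \<ge> (\<Sum>(i,j)\<in>H. i - j)"
    by (rule sum_mono2[OF fin]) (auto simp: H_def)
  moreover have "(\<Sum>(i,j)\<in>H. i - j) \<ge> (\<Sum>p\<in>H. D + 1)"
    by (rule sum_mono) (auto simp: H_def L_def)
  moreover have "(\<Sum>p\<in>H. D + 1) = card H * (D+1)" by simp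
  moreover have "card H * (D+1) \<ge> (w - D*D) * (D+1)"
    using cH cL by (intro mult_le_mono1) simp
  ultimately have S: "(\<Sum>(i,j)\<in>P. i - j) \<ge> (w - D*D) * (D+1)"
    by linarith
  define s where "s = (\<Sum>(i,j)\<in>P. i - j)"
  have "2 * s \<ge> w * (D+1)"
  proof -
    have "2 * (w - D*D) \<ge> w" using D2 by (simp add: power2_eq_square)
    hence "2 * (w - D*D) * (D+1) \<ge> w * (D+1)" by (rule mult_le_mono1)
    moreover have "2 * (w - D*D) * (D+1) \<le> 2 * s" using S unfolding s_def by simp
    ultimately show ?thesis by linarith
  qed
  hence "(2*s)^2 \<ge> (w*(D+1))^2" by (rule power_mono) simp
  hence A: "4 * s^2 \<ge> w^2 * (D+1)^2" by (simp only: power_mult_distrib) simp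
  have "w^3 = w^2 * w" by (simp add: power3_eq_cube power2_eq_square)
  also have "\<dots> \<le> w^2 * (2*(D+1)^2)" using wD by (intro mult_le_mono2) simp
  also have "\<dots> \<le> 2 * (4 * s^2)" using A by simp
  finally have "w^3 \<le> 8 * s^2" by simp
  thus ?thesis unfolding w_def s_def by simp
qed

theorem mainTheorem13:
  fixes V :: "'a set" and E :: "('a \<times> 'a) set" and vs :: "'a list" and k :: nat
  assumes "semi_complete V E"
    and "is_ordering V vs"
    and "ord_cost E vs \<le> k"
  shows "real (ord_width E vs) \<le> (4 * real k) powr (2 / 3)"
proof -
  have dist: "distinct vs" using assms(2) by (simp add: is_ordering_def)
  define n where "n = length vs"
  define Q where "Q = {(i, j). i < length vs \<and> j < i \<and> (vs ! i, vs ! j) \<in> E}"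
  have finQ: "finite Q" unfolding Q_def
    by (rule finite_subset[of _ "{..<length vs} \<times> {..<length vs}"]) auto
  have bound: "(card (arcs_between E (set (drop t vs)) (set (take t vs))))^3 \<le> 16 * k^2"
    if "t \<le> length vs" for t
  proof -
    define P where "P = {(i, j). i < length vs \<and> j < t \<and> t \<le> i \<and> (vs ! i, vs ! j) \<in> E}"
    have PQ: "P \<subseteq> Q" unfolding P_def Q_def by auto
    have finP: "finite P" using finite_subset[OF PQ finQ] .
    have bij: "bij_betw (\<lambda>(i,j). (vs!i, vs!j)) P (arcs_between E (set (drop t vs)) (set (take t vs)))"
    proof (rule bij_betw_imageI)
      show "inj_on (\<lambda>(i,j). (vs!i, vs!j)) P"
        unfolding inj_on_def P_def using dist that
        by (auto simp: nth_eq_iff_index_eq)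
      show "(\<lambda>(i,j). (vs!i, vs!j)) ` P = arcs_between E (set (drop t vs)) (set (take t vs))"
      proof
        show "(\<lambda>(i,j). (vs!i, vs!j)) ` P \<subseteq> arcs_between E (set (drop t vs)) (set (take t vs))"
        proof
          fix x assume "x \<in> (\<lambda>(i,j). (vs!i, vs!j)) ` P"
          then obtain i j where ij: "x = (vs!i, vs!j)" "i < length vs" "j < t" "t \<le> i" "(vs ! i, vs ! j) \<in> E"
            unfolding P_def by auto
          have "vs ! i = drop t vs ! (i - t)" using ij that by simp
          moreover have "i - t < length (drop t vs)" using ij by simp
          ultimately have "vs ! i \<in> set (drop t vs)" by (metis nth_mem)
          moreover have "vs ! j \<in> set (take t vs)"
            using ij that by (metis length_take min.absorb2 nth_mem nth_take)
          ultimately show "x \<in> arcs_between E (set (drop t vs)) (set (take t vs))"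
            unfolding arcs_between_def using ij by simp
        qed
      next
        show "arcs_between E (set (drop t vs)) (set (take t vs)) \<subseteq> (\<lambda>(i,j). (vs!i, vs!j)) ` P"
        proof
          fix x assume "x \<in> arcs_between E (set (drop t vs)) (set (take t vs))"
          then obtain u w where x: "x = (u,w)" "(u,w) \<in> E" "u \<in> set (drop t vs)" "w \<in> set (take t vs)"
            unfolding arcs_between_def by auto
          from x(3) obtain a where a: "a < length vs - t" "u = vs ! (t + a)"
            using that by (auto simp: in_set_conv_nth)
          from x(4) obtain b where b: "b < t" "w = vs ! b"
            using that by (auto simp: in_set_conv_nth)
          have "(t+a, b) \<in> P" unfolding P_def using a b x that by auto
          thus "x \<in> (\<lambda>(i,j). (vs!i, vs!j)) ` P" using a b x by force
        qed
      qed
    qed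
    have cardeq: "card (arcs_between E (set (drop t vs)) (set (take t vs))) = card P"
      using bij_betw_same_card[OF bij] by simp
    have "(\<Sum>(i,j)\<in>P. i - j) \<le> (\<Sum>(i,j)\<in>Q. i - j)"
      by (rule sum_mono2[OF finQ PQ]) auto
    also have "\<dots> = ord_cost E vs" unfolding ord_cost_def Q_def by simp
    also have "\<dots> \<le> k" by fact
    finally have sk: "(\<Sum>(i,j)\<in>P. i - j) \<le> k" .
    have "(card P)^3 \<le> 16 * (\<Sum>(i,j)\<in>P. i - j)^2"
      by (rule comb[OF finP, of t]) (auto simp: P_def)
    also have "\<dots> \<le> 16 * k^2" using sk by (simp add: power_mono)
    finally show ?thesis using cardeq by simp
  qed
  have wb: "(ord_width E vs)^3 \<le> 16 * k^2"
  proof -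
    have fin: "finite ({0} \<union> {card (arcs_between E (set (drop t vs)) (set (take t vs))) | t. 1 \<le> t \<and> t \<le> length vs - 1})"
      by auto
    have "ord_width E vs \<in> ({0} \<union> {card (arcs_between E (set (drop t vs)) (set (take t vs))) | t. 1 \<le> t \<and> t \<le> length vs - 1})"
      unfolding ord_width_def by (rule Max_in[OF fin]) auto
    thus ?thesis using bound by auto
  qed
  define w where "w = real (ord_width E vs)"
  have w3: "w^3 \<le> 16 * (real k)^2"
  proof -
    have "real ((ord_width E vs)^3) \<le> real (16 * k^2)" using wb by (rule of_nat_mono)
    thus ?thesis unfolding w_def by simp
  qed
  have w0: "w \<ge> 0" unfolding w_def by simp
  have "w = (w^3) powr (1/3)"
  proof (cases "w = 0")
    case False
    hence wp: "w > 0" using w0 by simp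
    have "(w^3) powr (1/3) = (w powr (real 3)) powr (1/3)" using powr_realpow[OF wp, of 3] by (simp only: of_nat_numeral)
    also have "\<dots> = w powr (real 3 * (1/3))" by (rule powr_powr)
    also have "\<dots> = w" using wp by simp
    finally show ?thesis by (rule sym)
  qed simp
  also have "\<dots> \<le> (16 * (real k)^2) powr (1/3)"
    by (rule powr_mono2) (use w3 w0 in auto)
  also have e1: "16 * (real k)^2 = (4 * real k) powr 2"
  proof (cases "k = 0")
    case False
    hence "4 * real k > 0" by simp
    from powr_realpow[OF this, of 2] show ?thesis by (simp add: power_mult_distrib)
  qed simp
  also have "((4 * real k) powr 2) powr (1/3) = (4 * real k) powr (2/3)"
    by (simp only: powr_powr) simp
  finally show ?thesis unfolding w_def .
qed

end
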